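(* In the basic model with $n$ odd, the worst-case deterministic round complexity of the nontrivial move problem is $\Theta(\log(N/n))$. That is, there is an algorithm solving it in $O(\log(N/n))$ rounds, and every deterministic algorithm needs $\Omega(\log(N/n))$ rounds in the worst case.
   Context: Model (basic): $n>4$ agents are at distinct, arbitrary initial positions on a circle of circumference $1$ and act in synchronised unit-time rounds. Each agent has its own notion of right (clockwise) and left; these need not be consistent across agents. At the start of each round every agent $a$ chooses $\mathrm{dir}_a\in\{\text{right},\text{left}\}$ and moves at unit speed. Agents never pass: two colliding agents instantly reverse direction. There is no communication. At the end of a round each agent learns only the clockwise distance, in its own orientation, from its start to its end position. Agents have distinct IDs in $\{1,\dots,N\}$, $N\ge n$ known, and know only the parity of $n$. Rotation index: if $n_C$ agents start clockwise and $n_A$ anticlockwise (objective orientation), each agent moves to the initial position of the agent $(n_C-n_A)\bmod n$ places clockwise; this is the rotation index. A nontrivial move is a round whose rotation index is not in $\{0,n/2\}$. The nontrivial move problem is to assign to each agent a direction $\mathrm{dir}_a$ so that the round in which all agents start in these directions is a nontrivial move. *)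

theory Defs
  imports Complex_Main
begin

text \<open>Agents are indexed 0..n-1 in the objective clockwise order of their initial
positions. pos s is the position (clockwise coordinate in [0,1)) of slot s,
orient i says whether agent i's own "right" is the objective clockwise direction,
ident i is the ID of agent i. A deterministic algorithm maps an ID and the list
of observations made so far to a direction (True = right, False = left, in the
agent's own orientation).\<close>

definition valid_config :: "nat \<Rightarrow> nat \<Rightarrow> (nat \<Rightarrow> real) \<Rightarrow> (nat \<Rightarrow> nat) \<Rightarrow> bool" where
  "valid_config N n pos ident \<longleftrightarrow>
     4 < n \<and> n \<le> N \<and>
     (\<forall>i<n. 0 \<le> pos i \<and> pos i < 1) \<and>
     (\<forall>i j. i < j \<and> j < n \<longrightarrow> pos i < pos j) \<and>
     inj_on ident {..<n} \<and> ident ` {..<n} \<subseteq> {1..N}"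

text \<open>Rotation index of a round in which agent i starts objectively clockwise iff cl i.\<close>
definition rot_index :: "nat \<Rightarrow> (nat \<Rightarrow> bool) \<Rightarrow> nat" where
  "rot_index n cl =
     nat ((int (card {i. i < n \<and> cl i}) - int (card {i. i < n \<and> \<not> cl i})) mod int n)"

definition cw_dist :: "real \<Rightarrow> real \<Rightarrow> real" where
  "cw_dist x y = frac (y - x)"

definition nontrivial :: "nat \<Rightarrow> nat \<Rightarrow> bool" where
  "nontrivial n r \<longleftrightarrow> r \<noteq> 0 \<and> 2 * r \<noteq> n"

definition objective_cw :: "(nat \<Rightarrow> bool) \<Rightarrow> nat \<Rightarrow> bool \<Rightarrow> bool" where
  "objective_cw orient i d \<longleftrightarrow> (d = orient i)"

text \<open>State before round t: cumulative rotation offset R (agent i occupies slot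
(i + R) mod n) and the observation history of every agent.\<close>
fun run :: "nat \<Rightarrow> (nat \<Rightarrow> real) \<Rightarrow> (nat \<Rightarrow> bool) \<Rightarrow> (nat \<Rightarrow> nat) \<Rightarrow>
            (nat \<Rightarrow> real list \<Rightarrow> bool) \<Rightarrow> nat \<Rightarrow> nat \<times> (nat \<Rightarrow> real list)" where
  "run n pos orient ident alg 0 = (0, \<lambda>i. [])"
| "run n pos orient ident alg (Suc t) =
     (let (R, h) = run n pos orient ident alg t;
          r = rot_index n (\<lambda>i. objective_cw orient i (alg (ident i) (h i)));
          obs = (\<lambda>i. let s = (i + R) mod n; e = (i + R + r) mod n in
                   if orient i then cw_dist (pos s) (pos e) else cw_dist (pos e) (pos s))
      in ((R + r) mod n, \<lambda>i. h i @ [obs i]))"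

definition round_rot :: "nat \<Rightarrow> (nat \<Rightarrow> real) \<Rightarrow> (nat \<Rightarrow> bool) \<Rightarrow> (nat \<Rightarrow> nat) \<Rightarrow>
            (nat \<Rightarrow> real list \<Rightarrow> bool) \<Rightarrow> nat \<Rightarrow> nat" where
  "round_rot n pos orient ident alg t =
     (let h = snd (run n pos orient ident alg t)
      in rot_index n (\<lambda>i. objective_cw orient i (alg (ident i) (h i))))"

end

theory Submission
  imports Defs
begin

lemma rot_zero_iff:
  assumes "odd n"
  shows "rot_index n cl = 0 \<longleftrightarrow> ((\<forall>i<n. cl i) \<or> (\<forall>i<n. \<not> cl i))"
proof -
  let ?A = "{i. i<n \<and> cl i}" let ?B = "{i. i<n \<and> \<not>cl i}"
  have fA: "finite ?A" and fB: "finite ?B" by auto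
  have disj: "?A \<inter> ?B = {}" by auto
  have un: "?A \<union> ?B = {..<n}" by auto
  have cs: "card ?A + card ?B = n"
    using card_Un_disjoint[OF fA fB disj] un by simp
  have np: "n > 0" using assms by (cases n) auto
  have "rot_index n cl = 0 \<longleftrightarrow> (int (card ?A) - int (card ?B)) mod int n = 0"
  proof -
    have "0 \<le> (int (card ?A) - int (card ?B)) mod int n" using np by simp
    thus ?thesis unfolding rot_index_def by linarith
  qed
  also have "\<dots> \<longleftrightarrow> int n dvd (int (card ?A) - int (card ?B))"
    by (simp add: dvd_eq_mod_eq_0)
  also have "\<dots> \<longleftrightarrow> card ?A = 0 \<or> card ?B = 0"
  proof
    assume d: "int n dvd (int (card ?A) - int (card ?B))"
    show "card ?A = 0 \<or> card ?B = 0"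
    proof (rule ccontr)
      assume "\<not> ?thesis"
      hence a: "card ?A \<ge> 1" "card ?B \<ge> 1" by linarith+
      have ne: "int (card ?A) - int (card ?B) \<noteq> 0"
      proof
        assume "int (card ?A) - int (card ?B) = 0"
        hence "card ?A = card ?B" by simp
        hence "n = 2 * card ?A" using cs by simp
        thus False using assms by (metis dvd_triv_left)
      qed
      have "\<bar>int n\<bar> \<le> \<bar>int (card ?A) - int (card ?B)\<bar>" by (rule dvd_imp_le_int[OF ne d])
      thus False using a cs by linarith
    qed
  next
    assume "card ?A = 0 \<or> card ?B = 0"
    thus "int n dvd (int (card ?A) - int (card ?B))"
    proof
      assume "card ?A = 0" hence "card ?B = n" using cs by linarith
      hence "int (card ?A) - int (card ?B) = - int n" using \<open>card ?A = 0\<close> by linarith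
      thus ?thesis by (metis dvd_minus_iff dvd_refl)
    next
      assume "card ?B = 0" hence "card ?A = n" using cs by linarith
      hence "int (card ?A) - int (card ?B) = int n" using \<open>card ?B = 0\<close> by linarith
      thus ?thesis by (metis dvd_refl)
    qed
  qed
  also have "\<dots> \<longleftrightarrow> ((\<forall>i<n. \<not> cl i) \<or> (\<forall>i<n. cl i))"
    using fA fB by (simp add: card_eq_0_iff)
  finally show ?thesis by blast
qed

lemma run_triv:
  assumes "\<forall>s<t. round_rot n pos orient ident alg s = 0"
  shows "run n pos orient ident alg t = (0, \<lambda>i. replicate t 0)"
  using assms
proof (induction t)
  case 0 show ?case by simp
next
  case (Suc t)
  have IH: "run n pos orient ident alg t = (0, \<lambda>i. replicate t 0)" using Suc by auto
  have r0: "rot_index n (\<lambda>i. objective_cw orient i (alg (ident i) (replicate t 0))) = 0"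
  proof -
    have "round_rot n pos orient ident alg t = 0" using Suc.prems by simp
    thus ?thesis unfolding round_rot_def using IH by (simp add: Let_def)
  qed
  have e: "\<And>i. replicate t (0::real) @ [0] = replicate (Suc t) 0"
    by (simp add: replicate_append_same)
  show ?case using IH r0 by (auto simp add: cw_dist_def Let_def fun_eq_iff replicate_append_same)
qed

lemma round_rot_triv:
  assumes "\<forall>s<t. round_rot n pos orient ident alg s = 0"
  shows "round_rot n pos orient ident alg t = rot_index n (\<lambda>i. alg (ident i) (replicate t 0) = orient i)"
  using run_triv[OF assms] unfolding round_rot_def objective_cw_def by simp

lemma div_eq_from_bits:
  fixes a b :: nat
  shows "a < 2^L \<Longrightarrow> b < 2^L \<Longrightarrow> m \<le> L \<Longrightarrow>
     (\<forall>j. m \<le> j \<and> j < L \<longrightarrow> odd (a div 2^j) = odd (b div 2^j)) \<Longrightarrow> a div 2^m = b div 2^m"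
proof (induction "L - m" arbitrary: m)
  case 0
  hence "m = L" by simp
  thus ?case using 0 by simp
next
  case (Suc d)
  have IH: "a div 2^Suc m = b div 2^Suc m" using Suc(1)[of "Suc m"] Suc(2-) by simp
  have p: "odd (a div 2^m) = odd (b div 2^m)" using Suc by auto
  have q: "x div 2^Suc m = x div 2^m div 2" for x :: nat by (metis power_Suc2 div_mult2_eq)
  have ea: "a div 2^m = 2 * (a div 2^Suc m) + (a div 2^m) mod 2"
    unfolding q by (metis div_mult_mod_eq mult.commute)
  have eb: "b div 2^m = 2 * (b div 2^Suc m) + (b div 2^m) mod 2"
    unfolding q by (metis div_mult_mod_eq mult.commute)
  have "(a div 2^m) mod 2 = (b div 2^m) mod 2" using p by (metis odd_iff_mod_2_eq_one even_iff_mod_2_eq_zero)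
  thus ?case using ea eb IH by simp
qed

lemma exists_log:
  assumes "(n::nat) \<ge> 1" shows "\<exists>m. 2^m \<le> n \<and> n < 2^Suc m"
proof -
  define k where "k = (LEAST k. n < (2::nat)^k)"
  have k1: "n < 2^k" unfolding k_def by (rule LeastI[of _ n]) simp
  have "k \<noteq> 0" using k1 assms by (cases k) auto
  moreover have "\<not> n < 2^(k-1)" unfolding k_def
    by (rule not_less_Least) (use \<open>k \<noteq> 0\<close> in \<open>simp add: k_def\<close>)
  ultimately show ?thesis using k1 by (intro exI[of _ "k-1"]) auto
qed

lemma pigeon:
  assumes "finite A" "finite B" "f ` A \<subseteq> B" "k * card B < card A"
  shows "\<exists>b\<in>B. k < card {a\<in>A. f a = b}"
proof (rule ccontr)
  assume "\<not> ?thesis"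
  hence le: "\<forall>b\<in>B. card {a\<in>A. f a = b} \<le> k" by auto
  have "A = (\<Union>b\<in>B. {a\<in>A. f a = b})" using assms(3) by auto
  hence "card A \<le> (\<Sum>b\<in>B. card {a\<in>A. f a = b})" using card_UN_le[OF assms(2)] by metis
  also have "\<dots> \<le> (\<Sum>b\<in>B. k)" using le by (intro sum_mono) auto
  finally show False using assms(4) by (simp add: mult.commute)
qed


definition algU :: "nat \<Rightarrow> nat \<Rightarrow> real list \<Rightarrow> bool" where
  "algU L x h = (if length h = 0 then False else odd ((x - 1) div 2 ^ (L - length h)))"

lemma upper_one:
  assumes V: "valid_config N n pos ident" and od: "odd n"
    and L1: "N \<le> 2^L" and L2: "0 < L \<Longrightarrow> 2^(L-1) < N"
  shows "\<exists>t. real (Suc t) \<le> 3 * (1 + log 2 (real N / real n)) \<and>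
                   nontrivial n (round_rot n pos orient (ident::nat\<Rightarrow>nat) (algU L) t)"
proof -
  have n4: "4 < n" and nN: "n \<le> N" and inj: "inj_on ident {..<n}"
    and rng: "ident ` {..<n} \<subseteq> {1..N}" using V unfolding valid_config_def by auto
  obtain m where m1: "2^m \<le> n" and m2: "n < 2^Suc m" using exists_log[of n] n4 by auto
  have m0: "2^m < n"
  proof -
    have "m \<noteq> 0" using m2 n4 by (cases m) auto
    hence "even ((2::nat)^m)" by simp
    thus ?thesis using m1 od by (metis le_neq_implies_less)
  qed
  have "(2::nat)^m \<le> 2^L" using m1 nN L1 by linarith
  hence mL: "m \<le> L" by (simp add: power_le_imp_le_exp)
  have Lp: "0 < L" using L1 n4 nN by (cases L) auto
  define t where "t = L - m"
  have ex: "\<exists>s\<le>t. nontrivial n (round_rot n pos orient ident (algU L) s)"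
  proof (rule ccontr)
    assume nt: "\<not> ?thesis"
    hence z: "\<forall>s\<le>t. round_rot n pos orient ident (algU L) s = 0"
    proof (intro allI impI)
      fix s assume "s \<le> t"
      hence "\<not> nontrivial n (round_rot n pos orient ident (algU L) s)" using nt by auto
      moreover have "2 * r \<noteq> n" for r using od by auto
      ultimately show "round_rot n pos orient ident (algU L) s = 0" unfolding nontrivial_def by blast
    qed
    have allcl: "(\<forall>i<n. algU L (ident i) (replicate s 0) = orient i) \<or>
                 (\<forall>i<n. \<not> (algU L (ident i) (replicate s 0) = orient i))" if "s \<le> t" for s
    proof -
      have z0: "\<forall>s'<s. round_rot n pos orient ident (algU L) s' = 0" using z that by simp
      have "round_rot n pos orient ident (algU L) s = rot_index n (\<lambda>i. algU L (ident i) (replicate s 0) = orient i)"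
        by (rule round_rot_triv[OF z0])
      moreover have "round_rot n pos orient ident (algU L) s = 0" using z that by blast
      ultimately have "rot_index n (\<lambda>i. algU L (ident i) (replicate s 0) = orient i) = 0" by simp
      thus ?thesis by (rule iffD1[OF rot_zero_iff[OF od]])
    qed
    have a0: "algU L x [] = False" for x unfolding algU_def by simp
    have o0: "\<forall>i<n. orient i = orient 0"
    proof -
      have "(\<forall>i<n. \<not> orient i) \<or> (\<forall>i<n. orient i)"
        using allcl[of 0] by (simp add: a0)
      moreover have "0 < n" using n4 by simp
      ultimately show ?thesis by blast
    qed
    have bits: "odd ((ident i - 1) div 2^j) = odd ((ident 0 - 1) div 2^j)"
      if "i < n" "m \<le> j" "j < L" for i j
    proof -
      have s1: "L - j \<le> t" "L - j \<noteq> 0" using that unfolding t_def by auto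
      have "L - (L - j) = j" using that by auto
      hence eq: "algU L x (replicate (L - j) 0) = odd ((x - 1) div 2^j)" for x
        unfolding algU_def using s1 by simp
      have A: "(\<forall>i<n. odd ((ident i - 1) div 2^j) = orient i) \<or> (\<forall>i<n. odd ((ident i - 1) div 2^j) \<noteq> orient i)"
        using allcl[OF s1(1)] unfolding eq by simp
      have "0 < n" using n4 by simp
      hence B: "(odd ((ident i - 1) div 2^j) = orient i \<and> odd ((ident 0 - 1) div 2^j) = orient 0) \<or>
             (odd ((ident i - 1) div 2^j) \<noteq> orient i \<and> odd ((ident 0 - 1) div 2^j) \<noteq> orient 0)"
        using A that by blast
      have "orient i = orient 0" using o0 that by blast
      with B show ?thesis by blast
    qed
    have lt: "ident i - 1 < 2^L" if "i < n" for i
    proof -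
      have "ident i \<in> {1..N}" using rng that by blast
      hence "1 \<le> ident i" "ident i \<le> N" by auto
      thus ?thesis using L1 by linarith
    qed
    have dq: "(ident i - 1) div 2^m = (ident 0 - 1) div 2^m" if "i < n" for i
    proof -
      have l0: "ident 0 - 1 < 2^L" using lt n4 by simp
      have "\<forall>j. m \<le> j \<and> j < L \<longrightarrow> odd ((ident i - 1) div 2^j) = odd ((ident 0 - 1) div 2^j)"
        using bits that by blast
      thus ?thesis by (rule div_eq_from_bits[OF lt[OF that] l0 mL])
    qed
    define q where "q = (ident 0 - 1) div 2^m"
    have sub: "(\<lambda>i. ident i - 1) ` {..<n} \<subseteq> {q * 2^m ..< q * 2^m + 2^m}"
    proof
      fix x assume "x \<in> (\<lambda>i. ident i - 1) ` {..<n}"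
      then obtain i where i: "i < n" "x = ident i - 1" by auto
      have "x div 2^m = q" using dq[OF i(1)] i unfolding q_def by simp
      thus "x \<in> {q * 2^m ..< q * 2^m + 2^m}"
      proof -
        have e: "x = x div 2^m * 2^m + x mod 2^m" by (rule div_mult_mod_eq[symmetric])
        have "x mod 2^m < 2^m" by simp
        thus ?thesis using e \<open>x div 2^m = q\<close> by (metis atLeastLessThan_iff add_less_cancel_left le_add1)
      qed
    qed
    have inj2: "inj_on (\<lambda>i. ident i - 1) {..<n}"
    proof (rule inj_onI)
      fix x y assume "x \<in> {..<n}" "y \<in> {..<n}" "ident x - 1 = ident y - 1"
      moreover have "ident x \<ge> 1" "ident y \<ge> 1" using rng \<open>x \<in> {..<n}\<close> \<open>y \<in> {..<n}\<close> by force+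
      ultimately have "ident x = ident y" by linarith
      thus "x = y" using inj \<open>x \<in> {..<n}\<close> \<open>y \<in> {..<n}\<close> by (simp add: inj_on_eq_iff)
    qed
    have "card ((\<lambda>i. ident i - 1) ` {..<n}) \<le> 2^m"
      using card_mono[OF _ sub] by simp
    hence "n \<le> 2^m" using card_image[OF inj2] by simp
    thus False using m0 by simp
  qed
  then obtain s where s: "s \<le> t" "nontrivial n (round_rot n pos orient ident (algU L) s)" by auto
  have lN: "real L - 1 < log 2 (real N)"
  proof -
    have "(2::nat)^(L-1) < N" using L2 Lp by simp
    hence "(2::real)^(L-1) < real N" by (metis of_nat_less_iff of_nat_numeral of_nat_power)
    hence "real (L-1) < log 2 (real N)" by (intro less_log_of_power) auto
    thus ?thesis using Lp by simp
  qed
  have ln: "log 2 (real n) < real m + 1"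
    using log2_of_power_less[of n "Suc m"] m2 n4 by simp
  have npos: "0 < real n" using n4 by simp
  have lg0: "0 \<le> log 2 (real N / real n)" using nN npos by simp
  have ld: "log 2 (real N / real n) = log 2 (real N) - log 2 (real n)"
    using npos nN by (intro log_divide_pos) auto
  have "real (Suc s) \<le> real (Suc t)" using s by simp
  also have "\<dots> = real L - real m + 1" unfolding t_def using mL by simp
  also have "\<dots> \<le> 3 * (1 + log 2 (real N / real n))"
  proof -
    define X where "X = log 2 (real N / real n)"
    have "real L - real m + 1 < X + 3" using lN ln ld unfolding X_def by linarith
    moreover have "0 \<le> X" using lg0 unfolding X_def .
    moreover have "3 * (1 + X) = 3 + 3 * X" by simp
    ultimately show ?thesis unfolding X_def[symmetric] by linarith
  qed
  finally show ?thesis using s by blast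
qed

lemma upper:
  "\<exists>c::real. \<forall>N. \<exists>alg.
            \<forall>n pos orient ident. valid_config N n pos ident \<and> odd n \<longrightarrow>
              (\<exists>t. real (Suc t) \<le> c * (1 + log 2 (real N / real n)) \<and>
                   nontrivial n (round_rot n pos orient ident alg t))"
proof (rule exI[of _ 3], intro allI)
  fix N :: nat
  define L where "L = (LEAST L. N \<le> (2::nat)^L)"
  have L1: "N \<le> 2^L" unfolding L_def by (rule LeastI[of _ N]) (simp add: less_imp_le)
  have L2: "2^(L-1) < N" if "0 < L"
  proof -
    have "\<not> N \<le> 2^(L-1)" unfolding L_def
      by (rule not_less_Least) (use that in \<open>simp add: L_def\<close>)
    thus ?thesis by simp
  qed
  show "\<exists>alg. \<forall>n pos orient ident. valid_config N n pos ident \<and> odd n \<longrightarrow>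
              (\<exists>t. real (Suc t) \<le> 3 * (1 + log 2 (real N / real n)) \<and>
                   nontrivial n (round_rot n pos orient ident alg t))"
    using upper_one[OF _ _ L1 L2] by blast
qed


lemma lower:
  "\<exists>c::real. c > 0 \<and> (\<forall>N n. odd n \<and> 4 < n \<and> n \<le> N \<longrightarrow>
            (\<forall>alg. \<exists>pos orient ident. valid_config N n pos ident \<and>
              (\<forall>t. real (Suc t) < c * log 2 (real N / real n) \<longrightarrow>
                   \<not> nontrivial n (round_rot n pos orient ident alg t))))"
proof (rule exI[of _ 1], intro conjI allI impI)
  show "(0::real) < 1" by simp
  fix N n :: nat and alg :: "nat \<Rightarrow> real list \<Rightarrow> bool"
  assume H: "odd n \<and> 4 < n \<and> n \<le> N"
  hence od: "odd n" and n4: "4 < n" and nN: "n \<le> N" by auto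
  have np: "0 < n" using n4 by simp
  have q1: "1 \<le> N div n"
  proof -
    have "n div n \<le> N div n" using nN by (rule div_le_mono)
    thus ?thesis using np by simp
  qed
  obtain T where T1: "2^T \<le> N div n" and T2: "N div n < 2^Suc T" using exists_log[OF q1] by auto
  have nT: "n * 2^T \<le> N"
  proof -
    have "n * 2^T \<le> n * (N div n)" using T1 by simp
    also have "\<dots> \<le> N" by (metis div_times_less_eq_dividend mult.commute)
    finally show ?thesis .
  qed
  have NT: "N < n * 2^Suc T"
  proof -
    have e: "N = n * (N div n) + N mod n" by simp
    have "N mod n < n" using np by simp
    hence "N < n * (N div n) + n" using e by linarith
    also have "\<dots> = n * (N div n + 1)" by simp
    also have "\<dots> \<le> n * 2^Suc T" using T2 by (intro mult_le_mono2) simp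
    finally show ?thesis .
  qed
  define f where "f x = map (\<lambda>s. alg x (replicate s 0) = alg x []) [0..<T]" for x
  define B where "B = {xs. set xs \<subseteq> (UNIV::bool set) \<and> length xs = T}"
  have fB: "finite B" unfolding B_def by (rule finite_lists_length_eq) simp
  have cB: "card B = 2^T" unfolding B_def using card_lists_length_eq[of "UNIV::bool set" T] by (simp only: finite_UNIV card_UNIV_bool)
  have img: "f ` {1..N} \<subseteq> B" unfolding B_def f_def by auto
  have "(n - 1) * card B < card {1..N}"
  proof -
    have "(n - 1) * 2^T < n * 2^T" using np by simp
    moreover have "card {1..N} = N" by simp
    ultimately show ?thesis unfolding cB using nT by linarith
  qed
  then obtain b where bB: "b \<in> B" and bc: "n - 1 < card {x\<in>{1..N}. f x = b}"
    using pigeon[OF _ fB img] by auto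
  have "n \<le> card {x\<in>{1..N}. f x = b}" using bc np by linarith
  then obtain S where S1: "S \<subseteq> {x\<in>{1..N}. f x = b}" and S2: "card S = n" and S3: "finite S"
    by (rule obtain_subset_with_card_n)
  obtain h where hb: "bij_betw h {0..<n} S" using ex_bij_betw_nat_finite[OF S3] S2 by auto
  have hS: "h i \<in> S" if "i < n" for i using hb that by (auto simp: bij_betw_def)
  have hf: "f (h i) = b" if "i < n" for i using hS[OF that] S1 by auto
  define pos where "pos i = real i / real n" for i
  define orient where "orient i = alg (h i) []" for i
  have V: "valid_config N n pos h"
    unfolding valid_config_def
  proof (intro conjI allI impI)
    show "4 < n" "n \<le> N" using n4 nN by auto
    fix i assume "i < n"
    thus "0 \<le> pos i" "pos i < 1" unfolding pos_def using np by auto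
  next
    fix i j assume "i < j \<and> j < n"
    thus "pos i < pos j" unfolding pos_def using np by (simp add: divide_strict_right_mono)
  next
    show "inj_on h {..<n}" using hb by (simp add: bij_betw_def lessThan_atLeast0)
    show "h ` {..<n} \<subseteq> {1..N}"
    proof
      fix y assume "y \<in> h ` {..<n}"
      then obtain i where "i < n" "y = h i" by auto
      thus "y \<in> {1..N}" using hS[of i] S1 by blast
    qed
  qed
  have triv: "round_rot n pos orient h alg s = 0" if "s < T" for s
    using that
  proof (induction s rule: less_induct)
    case (less s)
    have z0: "\<forall>s'<s. round_rot n pos orient h alg s' = 0" using less by auto
    have eq: "round_rot n pos orient h alg s = rot_index n (\<lambda>i. alg (h i) (replicate s 0) = orient i)"
      by (rule round_rot_triv[OF z0])
    have c: "(alg (h i) (replicate s 0) = orient i) = b ! s" if "i < n" for i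
    proof -
      have "b ! s = f (h i) ! s" using hf[OF that] by simp
      also have "\<dots> = (alg (h i) (replicate s 0) = alg (h i) [])"
        unfolding f_def using less.prems by simp
      finally show ?thesis unfolding orient_def by simp
    qed
    have "(\<forall>i<n. alg (h i) (replicate s 0) = orient i) \<or> (\<forall>i<n. \<not> (alg (h i) (replicate s 0) = orient i))"
      using c by (cases "b ! s") auto
    hence "rot_index n (\<lambda>i. alg (h i) (replicate s 0) = orient i) = 0"
      by (rule iffD2[OF rot_zero_iff[OF od]])
    thus ?case using eq by simp
  qed
  have "\<forall>t. real (Suc t) < 1 * log 2 (real N / real n) \<longrightarrow>
                   \<not> nontrivial n (round_rot n pos orient h alg t)"
  proof (intro allI impI)
    fix t assume tl: "real (Suc t) < 1 * log 2 (real N / real n)"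
    have pq: "0 < real N / real n" using np nN by simp
    have "real N < real n * 2^Suc T" using NT by (metis of_nat_less_iff of_nat_mult of_nat_numeral of_nat_power)
    hence "real N / real n < 2^Suc T" using np by (simp add: divide_less_eq mult.commute)
    moreover have "(2::real) powr real (Suc T) = 2^Suc T" by (rule powr_realpow) simp
    ultimately have "real N / real n < 2 powr real (Suc T)" by simp
    hence "log 2 (real N / real n) < real (Suc T)" using log_less_iff[of 2 "real N / real n"] pq by simp
    hence "t < T" using tl by simp
    thus "\<not> nontrivial n (round_rot n pos orient h alg t)"
      using triv unfolding nontrivial_def by simp
  qed
  thus "\<exists>pos orient ident. valid_config N n pos ident \<and>
              (\<forall>t. real (Suc t) < 1 * log 2 (real N / real n) \<longrightarrow>
                   \<not> nontrivial n (round_rot n pos orient ident alg t))"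
    using V by blast
qed

theorem proposition3:
  shows "(\<exists>c::real. \<forall>N. \<exists>alg.
            \<forall>n pos orient ident. valid_config N n pos ident \<and> odd n \<longrightarrow>
              (\<exists>t. real (Suc t) \<le> c * (1 + log 2 (real N / real n)) \<and>
                   nontrivial n (round_rot n pos orient ident alg t)))
       \<and> (\<exists>c::real. c > 0 \<and> (\<forall>N n. odd n \<and> 4 < n \<and> n \<le> N \<longrightarrow>
            (\<forall>alg. \<exists>pos orient ident. valid_config N n pos ident \<and>
              (\<forall>t. real (Suc t) < c * log 2 (real N / real n) \<longrightarrow>
                   \<not> nontrivial n (round_rot n pos orient ident alg t)))))"
  using upper lower by blast

end
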